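(* Let $n,k$ be positive integers. There exists a $k$--$\mathrm{MOFR}(2,2n;2)$ if and only if there exists an orthogonal array $\mathrm{OA}(2n,k,2,2)$.
   Context: A frequency rectangle of type $\mathrm{FR}(m,n;q)$ is an $m\times n$ array on a symbol set of size $q$ in which each symbol appears exactly $n/q$ times in each row and $m/q$ times in each column. Two frequency rectangles of the same type are orthogonal if upon superimposition each of the $q^2$ ordered pairs of symbols appears the same number of times. A $k$--$\mathrm{MOFR}(m,n;q)$ is a set of $k$ pairwise orthogonal frequency rectangles of type $\mathrm{FR}(m,n;q)$. An orthogonal array $\mathrm{OA}(N,k,q,t)$ is an $N\times k$ array on a symbol set of size $q$ such that in every $N\times t$ subarray each ordered $t$-tuple of symbols appears as a row the same number of times. *)

theory Defs
  imports Main
begin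

(* Arrays are functions nat => nat => nat, only the entries at row i < m and
   column j < n matter; the symbol set of size q is {0..<q}. *)

definition freq_rect :: "nat \<Rightarrow> nat \<Rightarrow> nat \<Rightarrow> (nat \<Rightarrow> nat \<Rightarrow> nat) \<Rightarrow> bool" where
  "freq_rect m n q A \<longleftrightarrow>
     (\<forall>i<m. \<forall>j<n. A i j < q) \<and>
     (\<forall>s<q. \<forall>i<m. card {j. j < n \<and> A i j = s} * q = n) \<and>
     (\<forall>s<q. \<forall>j<n. card {i. i < m \<and> A i j = s} * q = m)"

definition orth_fr :: "nat \<Rightarrow> nat \<Rightarrow> nat \<Rightarrow> (nat \<Rightarrow> nat \<Rightarrow> nat) \<Rightarrow> (nat \<Rightarrow> nat \<Rightarrow> nat) \<Rightarrow> bool" where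
  "orth_fr m n q A B \<longleftrightarrow>
     (\<exists>c. \<forall>a<q. \<forall>b<q.
        card {(i, j). i < m \<and> j < n \<and> A i j = a \<and> B i j = b} = c)"

definition MOFR :: "nat \<Rightarrow> nat \<Rightarrow> nat \<Rightarrow> nat \<Rightarrow> (nat \<Rightarrow> nat \<Rightarrow> nat \<Rightarrow> nat) \<Rightarrow> bool" where
  "MOFR k m n q F \<longleftrightarrow>
     (\<forall>l<k. freq_rect m n q (F l)) \<and>
     (\<forall>l<k. \<forall>l'<k. l \<noteq> l' \<longrightarrow> orth_fr m n q (F l) (F l'))"

definition orth_array :: "nat \<Rightarrow> nat \<Rightarrow> nat \<Rightarrow> nat \<Rightarrow> (nat \<Rightarrow> nat \<Rightarrow> nat) \<Rightarrow> bool" where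
  "orth_array N k q t A \<longleftrightarrow>
     (\<forall>r<N. \<forall>c<k. A r c < q) \<and>
     (\<forall>cs. distinct cs \<and> length cs = t \<and> set cs \<subseteq> {..<k} \<longrightarrow>
        (\<exists>lam. \<forall>u. length u = t \<and> set u \<subseteq> {..<q} \<longrightarrow>
           card {r. r < N \<and> map (A r) cs = u} = lam))"

end

theory Submission
  imports Defs
begin

lemma card_lt2:
  "card {i. i < (2::nat) \<and> P i} = (if P 0 then 1 else 0) + (if P 1 then 1 else 0)"
proof -
  have e: "{i. i < (2::nat) \<and> P i} = {i. i = 0 \<and> P i} \<union> {i. i = 1 \<and> P i}"
    by (auto simp: less_2_cases_iff)
  have "card ({i. i = (0::nat) \<and> P i} \<union> {i. i = 1 \<and> P i}) = card {i. i = (0::nat) \<and> P i} + card {i. i = 1 \<and> P i}"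
    by (rule card_Un_disjoint) auto
  moreover have "{i. i = (0::nat) \<and> P i} = (if P 0 then {0} else {})" by auto
  moreover have "{i. i = (1::nat) \<and> P i} = (if P 1 then {1} else {})" by auto
  ultimately show ?thesis using e by simp
qed

lemma card_split:
  assumes "\<forall>j<M. (y::nat \<Rightarrow> nat) j < 2"
  shows "card {j. j < M \<and> P j} = card {j. j < M \<and> P j \<and> y j = 0} + card {j. j < M \<and> P j \<and> y j = 1}"
proof -
  have "{j. j < M \<and> P j} = {j. j < M \<and> P j \<and> y j = 0} \<union> {j. j < M \<and> P j \<and> y j = 1}"
    using assms by (auto simp: less_2_cases_iff)
  moreover have "{j. j < M \<and> P j \<and> y j = 0} \<inter> {j. j < M \<and> P j \<and> y j = 1} = {}" by auto
  ultimately show ?thesis by (simp add: card_Un_disjoint)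
qed

lemma card_pairs:
  "card {(i, j). i < (2::nat) \<and> j < (M::nat) \<and> P i j} = card {j. j < M \<and> P 0 j} + card {j. j < M \<and> P 1 j}"
proof -
  have "{(i, j). i < (2::nat) \<and> j < M \<and> P i j} = Pair 0 ` {j. j < M \<and> P 0 j} \<union> Pair 1 ` {j. j < M \<and> P 1 j}"
    by (auto simp: less_2_cases_iff)
  moreover have "Pair (0::nat) ` {j. j < M \<and> P 0 j} \<inter> Pair 1 ` {j. j < M \<and> P 1 j} = {}" by auto
  ultimately show ?thesis by (simp add: card_Un_disjoint card_image inj_on_def)
qed

lemma fr_col:
  assumes "freq_rect 2 M 2 X" "j < M"
  shows "X 0 j < 2" "X 1 j = 1 - X 0 j"
proof -
  have e: "X 0 j < 2" "X 1 j < 2" using assms unfolding freq_rect_def by auto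
  have c: "card {i. i < 2 \<and> X i j = 0} = 1" "card {i. i < 2 \<and> X i j = 1} = 1"
    using assms unfolding freq_rect_def by auto
  show "X 0 j < 2" by (fact e)
  have c0: "(if X 0 j = 0 then 1 else 0) + (if X 1 j = 0 then 1 else 0) = (1::nat)"
    using c(1) unfolding card_lt2 by simp
  have c1: "(if X 0 j = 1 then 1 else 0) + (if X 1 j = 1 then 1 else 0) = (1::nat)"
    using c(2) unfolding card_lt2 by simp
  have "X 0 j = 0 \<or> X 0 j = 1" "X 1 j = 0 \<or> X 1 j = 1" using e by auto
  then show "X 1 j = 1 - X 0 j" using c0 c1 by (elim disjE) (simp_all split: if_splits)
qed

lemma arith4:
  fixes a b e d c M :: nat
  assumes "a + d = c" "b + e = c" "(a+b)*2 = M" "(e+d)*2 = M" "(a+e)*2 = M"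
  shows "b = a \<and> e = a \<and> d = a"
proof -
  have "b = e" using assms(3,5) by simp
  moreover have "d = a" using assms(3,4) \<open>b = e\<close> by simp
  moreover have "b = a" using assms(1,2) \<open>b = e\<close> \<open>d = a\<close> by simp
  ultimately show ?thesis by simp
qed

lemma core_fwd:
  assumes X: "freq_rect 2 M 2 X" and Y: "freq_rect 2 M 2 Y" and O: "orth_fr 2 M 2 X Y"
  shows "\<exists>lam. \<forall>a<2. \<forall>b<2. card {j. j < M \<and> X 0 j = a \<and> Y 0 j = b} = lam"
proof -
  define N where "N a b = card {j. j < M \<and> X 0 j = a \<and> Y 0 j = b}" for a b
  obtain c where hc: "\<forall>a<2. \<forall>b<2. card {(i, j). i < 2 \<and> j < M \<and> X i j = a \<and> Y i j = b} = c"
    using O unfolding orth_fr_def by auto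
  have x2: "\<forall>j<M. X 0 j < 2" and y2: "\<forall>j<M. Y 0 j < 2" using fr_col X Y by auto
  have eq: "card {(i, j). i < 2 \<and> j < M \<and> X i j = a \<and> Y i j = b} = N a b + N (1-a) (1-b)"
    if "a < 2" "b < 2" for a b
  proof -
    have "{j. j < M \<and> X 1 j = a \<and> Y 1 j = b} = {j. j < M \<and> X 0 j = 1 - a \<and> Y 0 j = 1 - b}"
    proof (rule set_eqI)
      fix j
      show "j \<in> {j. j < M \<and> X 1 j = a \<and> Y 1 j = b} \<longleftrightarrow> j \<in> {j. j < M \<and> X 0 j = 1 - a \<and> Y 0 j = 1 - b}"
      proof (cases "j < M")
        case True
        have "X 0 j = 0 \<or> X 0 j = 1" "Y 0 j = 0 \<or> Y 0 j = 1" "a = 0 \<or> a = 1" "b = 0 \<or> b = 1"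
          using x2 y2 True that by auto
        then show ?thesis using fr_col(2)[OF X True] fr_col(2)[OF Y True] True by auto
      qed simp
    qed
    then show ?thesis unfolding card_pairs N_def by simp
  qed
  have r: "card {j. j < M \<and> X 0 j = s} * 2 = M" "card {j. j < M \<and> Y 0 j = s} * 2 = M" if "s < 2" for s
    using X Y that unfolding freq_rect_def by auto
  have sx: "card {j. j < M \<and> X 0 j = s} = N s 0 + N s 1" for s
    unfolding N_def using card_split[OF y2, of "\<lambda>j. X 0 j = s"] by simp
  have sy: "card {j. j < M \<and> Y 0 j = s} = N 0 s + N 1 s" for s
  proof -
    have "card {j. j < M \<and> Y 0 j = s} = card {j. j < M \<and> Y 0 j = s \<and> X 0 j = 0} + card {j. j < M \<and> Y 0 j = s \<and> X 0 j = 1}"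
      using card_split[OF x2, of "\<lambda>j. Y 0 j = s"] by simp
    moreover have "{j. j < M \<and> Y 0 j = s \<and> X 0 j = a} = {j. j < M \<and> X 0 j = a \<and> Y 0 j = s}" for a by auto
    ultimately show ?thesis unfolding N_def by simp
  qed
  have e1: "N 0 0 + N 1 1 = c" using eq[of 0 0] hc by auto
  have e2: "N 0 1 + N 1 0 = c" using eq[of 0 1] hc by auto
  have r1: "(N 0 0 + N 0 1) * 2 = M" using r(1)[of 0] sx[of 0] by simp
  have r2: "(N 1 0 + N 1 1) * 2 = M" using r(1)[of 1] sx[of 1] by simp
  have r3: "(N 0 0 + N 1 0) * 2 = M" using r(2)[of 0] sy[of 0] by simp
  have "N 0 1 = N 0 0 \<and> N 1 0 = N 0 0 \<and> N 1 1 = N 0 0" by (rule arith4[OF e1 e2 r1 r2 r3])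
  then have "\<forall>a<2. \<forall>b<2. N a b = N 0 0" by (auto simp: less_2_cases_iff)
  then show ?thesis unfolding N_def by blast
qed

lemma oa_use:
  assumes "orth_array N k 2 2 A" "c1 \<noteq> c2" "c1 < k" "c2 < k"
  shows "\<exists>lam. \<forall>a<2. \<forall>b<2. card {r. r < N \<and> A r c1 = a \<and> A r c2 = b} = lam"
proof -
  have d: "distinct [c1, c2] \<and> length [c1, c2] = 2 \<and> set [c1, c2] \<subseteq> {..<k}" using assms by auto
  obtain lam where h: "\<forall>u. length u = 2 \<and> set u \<subseteq> {..<2} \<longrightarrow> card {r. r < N \<and> map (A r) [c1, c2] = u} = lam"
    using assms(1) d unfolding orth_array_def by blast
  show ?thesis
  proof (intro exI allI impI)
    fix a b :: nat assume "a < 2" "b < 2"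
    then have "card {r. r < N \<and> map (A r) [c1, c2] = [a, b]} = lam" using h[rule_format, of "[a, b]"] by simp
    then show "card {r. r < N \<and> A r c1 = a \<and> A r c2 = b} = lam" by simp
  qed
qed

lemma len2: "length u = 2 \<Longrightarrow> \<exists>a b. u = [a, b]"
  by (cases u; cases "tl u"; auto)

lemma oa_mk:
  assumes "\<forall>r<N. \<forall>c<k. A r c < 2"
    and "\<And>c1 c2. c1 \<noteq> c2 \<Longrightarrow> c1 < k \<Longrightarrow> c2 < k \<Longrightarrow>
      \<exists>lam. \<forall>a<2. \<forall>b<2. card {r. r < N \<and> A r c1 = a \<and> A r c2 = b} = lam"
  shows "orth_array N k 2 2 A"
  unfolding orth_array_def
proof (intro conjI allI impI)
  show "\<And>r c. r < N \<Longrightarrow> c < k \<Longrightarrow> A r c < 2" using assms(1) by auto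
  fix cs :: "nat list" assume cs: "distinct cs \<and> length cs = 2 \<and> set cs \<subseteq> {..<k}"
  then obtain c1 c2 where c: "cs = [c1, c2]" using len2 by blast
  then have "c1 \<noteq> c2" "c1 < k" "c2 < k" using cs by auto
  then obtain lam where h: "\<forall>a<2. \<forall>b<2. card {r. r < N \<and> A r c1 = a \<and> A r c2 = b} = lam"
    using assms(2) by blast
  show "\<exists>lam. \<forall>u. length u = 2 \<and> set u \<subseteq> {..<2} \<longrightarrow> card {r. r < N \<and> map (A r) cs = u} = lam"
  proof (intro exI allI impI)
    fix u :: "nat list" assume u: "length u = 2 \<and> set u \<subseteq> {..<2}"
    then obtain a b where ab: "u = [a, b]" using len2 by blast
    then have "a < 2" "b < 2" using u by auto
    then show "card {r. r < N \<and> map (A r) cs = u} = lam" using h ab c by simp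
  qed
qed

lemma coll_eq: "(\<And>j. j < (M::nat) \<Longrightarrow> P j = Q j) \<Longrightarrow> {j. j < M \<and> P j} = {j. j < M \<and> Q j}"
  by auto

lemma inv_eq: "(x::nat) < 2 \<Longrightarrow> s < 2 \<Longrightarrow> (1 - x = s) = (x = 1 - s)"
  by auto

lemma card_lt2_one: "(x::nat) < 2 \<Longrightarrow> s < 2 \<Longrightarrow> card {i. i < (2::nat) \<and> (if i = 0 then x else 1 - x) = s} = 1"
  unfolding card_lt2 by (cases s; cases x) auto

theorem mainTheorem3:
  fixes n k :: nat
  assumes "0 < n" and "0 < k"
  shows "(\<exists>F. MOFR k 2 (2 * n) 2 F) \<longleftrightarrow> (\<exists>A. orth_array (2 * n) k 2 2 A)"
proof
  assume "\<exists>F. MOFR k 2 (2 * n) 2 F"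
  then obtain F where F: "MOFR k 2 (2 * n) 2 F" by blast
  have fr: "\<And>l. l < k \<Longrightarrow> freq_rect 2 (2*n) 2 (F l)" using F unfolding MOFR_def by auto
  have "orth_array (2 * n) k 2 2 (\<lambda>r c. F c 0 r)"
  proof (rule oa_mk)
    show "\<forall>r<2 * n. \<forall>c<k. F c 0 r < 2"
    proof (intro allI impI)
      fix r c assume "r < 2 * n" "c < k"
      then show "F c 0 r < 2" using fr_col(1)[OF fr] by blast
    qed
    fix c1 c2 assume c: "c1 \<noteq> c2" "c1 < k" "c2 < k"
    then have o: "orth_fr 2 (2*n) 2 (F c1) (F c2)" using F unfolding MOFR_def by blast
    show "\<exists>lam. \<forall>a<2. \<forall>b<2. card {r. r < 2*n \<and> F c1 0 r = a \<and> F c2 0 r = b} = lam"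
      by (rule core_fwd[OF fr[OF c(2)] fr[OF c(3)] o])
  qed
  then show "\<exists>A. orth_array (2 * n) k 2 2 A" by blast
next
  assume "\<exists>A. orth_array (2 * n) k 2 2 A"
  then obtain A where A: "orth_array (2 * n) k 2 2 A" by blast
  define F where "F = (\<lambda>l (i::nat) j. if i = 0 then A j l else 1 - A j l)"
  have a2: "\<forall>r<2*n. \<forall>c<k. A r c < 2" using A unfolding orth_array_def by blast
  show "\<exists>F. MOFR k 2 (2 * n) 2 F"
  proof (cases "k = 1")
    case True
    define G where "G = (\<lambda>(l::nat) (i::nat) (j::nat). if i = 0 then (if j < n then 0 else 1) else (if j < n then 1 else (0::nat)))"
    have s1: "card {j. j < 2*n \<and> j < n} = n"
    proof -
      have "{j. j < 2*n \<and> j < n} = {..<n}" by auto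
      then show ?thesis by simp
    qed
    have s2: "card {j. j < 2*n \<and> \<not> j < n} = n"
    proof -
      have "{j. j < 2*n \<and> \<not> j < n} = {n..<2*n}" by auto
      then show ?thesis by simp
    qed
    have "freq_rect 2 (2*n) 2 (G 0)"
      unfolding freq_rect_def
    proof (intro conjI allI impI)
      show "\<And>i j. i < 2 \<Longrightarrow> j < 2 * n \<Longrightarrow> G 0 i j < 2" unfolding G_def by auto
      fix s :: nat assume s: "s < 2"
      show "card {j. j < 2 * n \<and> G 0 i j = s} * 2 = 2 * n" if i: "i < 2" for i
      proof -
        have g: "G 0 i j = s \<longleftrightarrow> (j < n \<longleftrightarrow> (i = 0 \<longleftrightarrow> s = 0))" for j
          using s i unfolding G_def by (cases s) auto
        have "{j. j < 2 * n \<and> G 0 i j = s} = {j. j < 2*n \<and> (j < n \<longleftrightarrow> (i = 0 \<longleftrightarrow> s = 0))}"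
          by (rule coll_eq) (rule g)
        then show ?thesis using s1 s2 by (cases "i = 0 \<longleftrightarrow> s = 0") simp_all
      qed
      show "card {i. i < 2 \<and> G 0 i j = s} * 2 = 2" if "j < 2 * n" for j
      proof -
        have "card {i. i < 2 \<and> G 0 i j = s} = 1"
          unfolding card_lt2 G_def using s by (cases "j < n") auto
        then show ?thesis by simp
      qed
    qed
    moreover have "G l = G 0" for l unfolding G_def by simp
    ultimately have "MOFR k 2 (2 * n) 2 G" unfolding MOFR_def using True by auto
    then show ?thesis by blast
  next
    case False
    then have k2: "k \<ge> 2" using assms by auto
    have tot: "card {j. j < 2*n \<and> A j l = 0} + card {j. j < 2*n \<and> A j l = 1} = 2*n" if "l < k" for l
    proof -
      have "\<forall>j<2*n. A j l < 2" using a2 that by blast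
      from card_split[OF this, of "\<lambda>j. True"] show ?thesis by simp
    qed
    have rowc: "card {j. j < 2*n \<and> A j l = s} * 2 = 2*n" if ls: "l < k" "s < 2" for l s
    proof -
      define l' where "l' = (if l = 0 then 1 else (0::nat))"
      have "l' \<noteq> l" "l' < k" using k2 l'_def by auto
      then obtain lam where h: "\<forall>a<2. \<forall>b<2. card {r. r < 2*n \<and> A r l = a \<and> A r l' = b} = lam"
        using oa_use[OF A, of l l'] ls by blast
      have y2: "\<forall>j<2*n. A j l' < 2" using a2 \<open>l' < k\<close> by blast
      have "card {j. j < 2*n \<and> A j l = t} = 2 * lam" if "t < 2" for t
        using card_split[OF y2, of "\<lambda>j. A j l = t"] h that by simp
      then show ?thesis using tot[OF \<open>l < k\<close>] ls by simp
    qed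
    have "freq_rect 2 (2*n) 2 (F l)" if l: "l < k" for l
      unfolding freq_rect_def
    proof (intro conjI allI impI)
      have x2: "\<And>j. j < 2*n \<Longrightarrow> A j l < 2" using a2 l by blast
      show "\<And>i j. i < 2 \<Longrightarrow> j < 2 * n \<Longrightarrow> F l i j < 2" unfolding F_def using x2 by auto
      fix s :: nat assume s: "s < 2"
      show "card {j. j < 2 * n \<and> F l i j = s} * 2 = 2 * n" if i: "i < 2" for i
      proof (cases "i = 0")
        case True
        then show ?thesis unfolding F_def using rowc[OF l s] by simp
      next
        case False
        have "{j. j < 2 * n \<and> F l i j = s} = {j. j < 2 * n \<and> A j l = 1 - s}"
        proof (rule coll_eq)
          fix j assume "j < 2 * n"
          from inv_eq[OF x2[OF this] s] show "(F l i j = s) = (A j l = 1 - s)" by (simp add: F_def False)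
        qed
        moreover have "1 - s < 2" by simp
        ultimately show ?thesis using rowc[OF l] by simp
      qed
      show "card {i. i < 2 \<and> F l i j = s} * 2 = 2" if "j < 2 * n" for j
        unfolding F_def using card_lt2_one[OF x2[OF that] s] by simp
    qed
    moreover have "orth_fr 2 (2*n) 2 (F l) (F l')" if ll: "l < k" "l' < k" "l \<noteq> l'" for l l'
    proof -
      obtain lam where h: "\<forall>a<2. \<forall>b<2. card {r. r < 2*n \<and> A r l = a \<and> A r l' = b} = lam"
        using oa_use[OF A, of l l'] ll by blast
      have x2: "\<And>j. j < 2*n \<Longrightarrow> A j l < 2" using a2 that by blast
      have y2: "\<And>j. j < 2*n \<Longrightarrow> A j l' < 2" using a2 that by blast
      have "card {(i, j). i < 2 \<and> j < 2*n \<and> F l i j = a \<and> F l' i j = b} = 2 * lam"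
        if ab: "a < 2" "b < 2" for a b
      proof -
        have e: "{j. j < 2*n \<and> 1 - A j l = a \<and> 1 - A j l' = b} = {j. j < 2*n \<and> A j l = 1 - a \<and> A j l' = 1 - b}"
        proof (rule coll_eq)
          fix j assume j: "j < 2 * n"
          from inv_eq[OF x2[OF j] ab(1)] inv_eq[OF y2[OF j] ab(2)]
          show "(1 - A j l = a \<and> 1 - A j l' = b) = (A j l = 1 - a \<and> A j l' = 1 - b)" by simp
        qed
        have "card {(i, j). i < 2 \<and> j < 2*n \<and> F l i j = a \<and> F l' i j = b} =
          card {j. j < 2*n \<and> A j l = a \<and> A j l' = b} + card {j. j < 2*n \<and> 1 - A j l = a \<and> 1 - A j l' = b}"
          unfolding card_pairs F_def by simp
        also have "\<dots> = lam + lam" unfolding e using h ab by simp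
        finally show ?thesis by simp
      qed
      then show ?thesis unfolding orth_fr_def by blast
    qed
    ultimately have "MOFR k 2 (2 * n) 2 F" unfolding MOFR_def by blast
    then show ?thesis by blast
  qed
qed

end
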